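(* Let $X_1,X_2,\dots$ be iid random variables satisfying condition $(\mathrm{P})$ with constant $a>0$, and $S_k=X_1+\dots+X_k$. Then for each $\epsilon>0$ there is $B>0$ such that for all $k\ge3$ and $u>0$, $$P(S_k>u+a)\le\epsilon P(S_k>u)+\frac{P(S_{k-1}>u)}{P(X_1>B)}.$$
   Context: A random variable $Y$ satisfies condition $(\mathrm{P})$ with constant $a>0$ if $P(Y>u)>0$ for all $u>0$ and $\lim_{u\to\infty}P(Y>u+a)/P(Y>u)=0$. *)

theory Defs
  imports "HOL-Probability.Probability"
begin

definition condP :: "'a measure \<Rightarrow> ('a \<Rightarrow> real) \<Rightarrow> real \<Rightarrow> bool" where
  "condP M Y a \<longleftrightarrow> a > 0 \<and>
     (\<forall>u>0. measure M {x \<in> space M. Y x > u} > 0) \<and>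
     ((\<lambda>u. measure M {x \<in> space M. Y x > u + a} / measure M {x \<in> space M. Y x > u})
        \<longlongrightarrow> 0) at_top"

end

theory Submission imports Defs begin
lemma core2:
  assumes PS: "prob_space M" and V: "V \<in> measurable M N" and W: "W \<in> measurable M K"
    and h: "h \<in> measurable K borel"
    and ind: "prob_space.indep_var M N V K W"
    and P: "Measurable.pred (N \<Otimes>\<^sub>M borel) P" and Q: "Measurable.pred (N \<Otimes>\<^sub>M borel) Q"
    and le: "\<And>v. v \<in> space N \<Longrightarrow> emeasure M {x\<in>space M. P (v, h (W x))} \<le> c * emeasure M {x\<in>space M. Q (v, h (W x))}"
  shows "emeasure M {x\<in>space M. P (V x, h (W x))} \<le> c * emeasure M {x\<in>space M. Q (V x, h (W x))}"
proof -
  interpret prob_space M by fact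
  interpret DW: prob_space "distr M K W" by (rule prob_space_distr) (rule W)
  have J: "distr M N V \<Otimes>\<^sub>M distr M K W = distr M (N \<Otimes>\<^sub>M K) (\<lambda>x. (V x, W x))"
    using ind indep_var_distribution_eq by blast
  have VW: "(\<lambda>x. (V x, W x)) \<in> measurable M (N \<Otimes>\<^sub>M K)" using V W by measurable
  have Gm: "{p\<in>space (N \<Otimes>\<^sub>M K). R (fst p, h (snd p))} \<in> sets (N \<Otimes>\<^sub>M K)"
    if R: "Measurable.pred (N \<Otimes>\<^sub>M borel) R" for R
  proof -
    have "(\<lambda>p. (fst p, h (snd p))) \<in> measurable (N \<Otimes>\<^sub>M K) (N \<Otimes>\<^sub>M borel)"
      using h by measurable
    then have "Measurable.pred (N \<Otimes>\<^sub>M K) (\<lambda>p. R (fst p, h (snd p)))"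
      using R by (rule measurable_compose)
    then show ?thesis by measurable
  qed
  have eqv: "emeasure (distr M K W) (Pair v -` {p\<in>space (N \<Otimes>\<^sub>M K). R (fst p, h (snd p))})
      = emeasure M {x\<in>space M. R (v, h (W x))}"
    if R: "Measurable.pred (N \<Otimes>\<^sub>M borel) R" and v: "v \<in> space N" for R v
  proof -
    have S: "Pair v -` {p\<in>space (N \<Otimes>\<^sub>M K). R (fst p, h (snd p))} \<in> sets K"
      by (rule sets_Pair1[OF Gm[OF R]])
    show ?thesis
      apply (subst emeasure_distr[OF W S])
      apply (rule arg_cong[where f="emeasure M"])
      using W v by (auto simp: measurable_def space_pair_measure)
  qed
  have gen: "emeasure M {x\<in>space M. R (V x, h (W x))} = (\<integral>\<^sup>+v. emeasure M {x\<in>space M. R (v, h (W x))} \<partial>distr M N V)"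
    if R: "Measurable.pred (N \<Otimes>\<^sub>M borel) R" for R
  proof -
    let ?G = "{p\<in>space (N \<Otimes>\<^sub>M K). R (fst p, h (snd p))}"
    have G: "?G \<in> sets (N \<Otimes>\<^sub>M K)" by (rule Gm[OF R])
    have "emeasure M {x\<in>space M. R (V x, h (W x))} = emeasure (distr M (N \<Otimes>\<^sub>M K) (\<lambda>x. (V x, W x))) ?G"
      apply (subst emeasure_distr[OF VW G])
      apply (rule arg_cong[where f="emeasure M"])
      using VW by (auto simp: measurable_def)
    also have "\<dots> = emeasure (distr M N V \<Otimes>\<^sub>M distr M K W) ?G" by (simp only: J)
    also have "\<dots> = (\<integral>\<^sup>+v. emeasure (distr M K W) (Pair v -` ?G) \<partial>distr M N V)"
      apply (rule DW.emeasure_pair_measure_alt)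
      using G by (simp only: sets_pair_measure_cong[OF sets_distr sets_distr])
    also have "\<dots> = (\<integral>\<^sup>+v. emeasure M {x\<in>space M. R (v, h (W x))} \<partial>distr M N V)"
      by (rule nn_integral_cong, rule eqv[OF R]) simp
    finally show ?thesis .
  qed
  have mQ: "(\<lambda>v. emeasure M {x\<in>space M. Q (v, h (W x))}) \<in> borel_measurable (distr M N V)"
  proof -
    let ?G = "{p\<in>space (N \<Otimes>\<^sub>M K). Q (fst p, h (snd p))}"
    have G: "?G \<in> sets (distr M N V \<Otimes>\<^sub>M distr M K W)" using Gm[OF Q] by (simp only: sets_pair_measure_cong[OF sets_distr sets_distr])
    have m1: "(\<lambda>v. emeasure (distr M K W) (Pair v -` ?G)) \<in> borel_measurable (distr M N V)"
      by (rule DW.measurable_emeasure_Pair[OF G])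
    have iff: "(\<lambda>v. emeasure (distr M K W) (Pair v -` ?G)) \<in> borel_measurable (distr M N V) \<longleftrightarrow> (\<lambda>v. emeasure M {x\<in>space M. Q (v, h (W x))}) \<in> borel_measurable (distr M N V)"
      by (rule measurable_cong, rule eqv[OF Q]) simp
    show ?thesis using iff m1 by simp
  qed
  have "emeasure M {x\<in>space M. P (V x, h (W x))} = (\<integral>\<^sup>+v. emeasure M {x\<in>space M. P (v, h (W x))} \<partial>distr M N V)"
    by (rule gen[OF P])
  also have "\<dots> \<le> (\<integral>\<^sup>+v. c * emeasure M {x\<in>space M. Q (v, h (W x))} \<partial>distr M N V)"
    by (rule nn_integral_mono) (use le in simp)
  also have "\<dots> = c * (\<integral>\<^sup>+v. emeasure M {x\<in>space M. Q (v, h (W x))} \<partial>distr M N V)"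
    by (rule nn_integral_cmult[OF mQ])
  also have "\<dots> = c * emeasure M {x\<in>space M. Q (V x, h (W x))}" by (simp add: gen[OF Q])
  finally show ?thesis .
qed

lemma core3:
  fixes X :: "'i \<Rightarrow> 'a \<Rightarrow> real"
  assumes PS: "prob_space M" and Xm: "\<And>i. X i \<in> borel_measurable M"
    and ind: "prob_space.indep_vars M (\<lambda>_. borel) X UNIV"
    and j: "j \<notin> A"
    and P: "Measurable.pred (PiM A (\<lambda>_. borel) \<Otimes>\<^sub>M borel) P" and Q: "Measurable.pred (PiM A (\<lambda>_. borel) \<Otimes>\<^sub>M borel) Q"
    and c: "c \<ge> 0"
    and le: "\<And>v. v \<in> space (PiM A (\<lambda>_. borel)) \<Longrightarrow> measure M {x\<in>space M. P (v, X j x)} \<le> c * measure M {x\<in>space M. Q (v, X j x)}"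
  shows "measure M {x\<in>space M. P (restrict (\<lambda>i. X i x) A, X j x)} \<le> c * measure M {x\<in>space M. Q (restrict (\<lambda>i. X i x) A, X j x)}"
proof -
  interpret prob_space M by fact
  have i1: "indep_var (PiM A (\<lambda>_. borel)) (\<lambda>x. restrict (\<lambda>i. X i x) A) (PiM {j} (\<lambda>_. borel)) (\<lambda>x. restrict (\<lambda>i. X i x) {j})"
    by (rule indep_var_restrict[OF ind]) (use j in auto)
  have Vm: "(\<lambda>x. restrict (\<lambda>i. X i x) A) \<in> measurable M (PiM A (\<lambda>_. borel))"
    using Xm by (auto intro!: measurable_restrict)
  have Wm: "(\<lambda>x. restrict (\<lambda>i. X i x) {j}) \<in> measurable M (PiM {j} (\<lambda>_. borel))"
    using Xm by (auto intro!: measurable_restrict)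
  have hm: "(\<lambda>f. f j) \<in> measurable (PiM {j} (\<lambda>_. borel)) (borel :: real measure)"
    by (rule measurable_component_singleton) simp
  have "emeasure M {x\<in>space M. P (restrict (\<lambda>i. X i x) A, (\<lambda>f. f j) (restrict (\<lambda>i. X i x) {j}))}
      \<le> ennreal c * emeasure M {x\<in>space M. Q (restrict (\<lambda>i. X i x) A, (\<lambda>f. f j) (restrict (\<lambda>i. X i x) {j}))}"
  proof (rule core2[of M "(\<lambda>x. restrict (\<lambda>i. X i x) A)" "PiM A (\<lambda>_. borel)" "(\<lambda>x. restrict (\<lambda>i. X i x) {j})" "PiM {j} (\<lambda>_. borel)" "\<lambda>f. f j" P Q, OF PS Vm Wm _ i1 P Q])
    show "(\<lambda>f. f j) \<in> borel_measurable (PiM {j} (\<lambda>_. borel))" by (rule measurable_component_singleton) simp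
  next
    fix v :: "'i \<Rightarrow> real" assume "v \<in> space (PiM A (\<lambda>_. borel))"
    then show "emeasure M {x\<in>space M. P (v, (\<lambda>f. f j) (restrict (\<lambda>i. X i x) {j}))}
      \<le> ennreal c * emeasure M {x\<in>space M. Q (v, (\<lambda>f. f j) (restrict (\<lambda>i. X i x) {j}))}"
      using le[of v] c by (simp add: emeasure_eq_measure ennreal_mult''[symmetric] ennreal_le_iff)
  qed
  then show ?thesis
    using c by (simp add: emeasure_eq_measure ennreal_mult''[symmetric] ennreal_le_iff)
qed
lemma mc: fixes AA :: "nat set" and cc :: "real \<Rightarrow> real \<Rightarrow> real \<Rightarrow> bool"
  assumes "{..<mm} \<subseteq> AA" "ll \<in> AA" and cc: "Measurable.pred (borel \<Otimes>\<^sub>M borel \<Otimes>\<^sub>M borel) (\<lambda>p. cc (fst p) (fst (snd p)) (snd (snd p)))"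
    and PP: "\<And>p. PP p = cc (\<Sum>i<mm. fst p i) (fst p ll) (snd p)"
  shows "Measurable.pred (PiM AA (\<lambda>_. borel) \<Otimes>\<^sub>M (borel :: real measure)) PP"
proof -
  have s: "(\<lambda>p. \<Sum>i<mm. (fst p i :: real)) \<in> borel_measurable (PiM AA (\<lambda>_. borel) \<Otimes>\<^sub>M (borel :: real measure))"
  proof (rule borel_measurable_sum)
    fix i assume "i \<in> {..<mm}"
    then have "i \<in> AA" using assms by auto
    then show "(\<lambda>p. (fst p i :: real)) \<in> borel_measurable (PiM AA (\<lambda>_. borel :: real measure) \<Otimes>\<^sub>M (borel :: real measure))"
      by (intro measurable_compose[OF measurable_fst measurable_component_singleton])
  qed
  have ll: "(\<lambda>p. (fst p ll :: real)) \<in> borel_measurable (PiM AA (\<lambda>_. borel :: real measure) \<Otimes>\<^sub>M (borel :: real measure))"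
    using assms(2) by (intro measurable_compose[OF measurable_fst measurable_component_singleton])
  have "(\<lambda>p. ((\<Sum>i<mm. fst p i), (fst p ll), snd p)) \<in> measurable (PiM AA (\<lambda>_. borel) \<Otimes>\<^sub>M (borel :: real measure)) (borel \<Otimes>\<^sub>M borel \<Otimes>\<^sub>M borel :: (real \<times> real \<times> real) measure)"
    by (intro measurable_Pair s ll measurable_snd)
  from measurable_compose[OF this cc] have "Measurable.pred (PiM AA (\<lambda>_. borel) \<Otimes>\<^sub>M (borel :: real measure)) (\<lambda>p. cc (\<Sum>i<mm. fst p i) (fst p ll) (snd p))" by simp
  moreover have "PP = (\<lambda>p. cc (\<Sum>i<mm. fst p i) (fst p ll) (snd p))" using PP by (rule ext)
  ultimately show ?thesis by simp
qed

theorem lemma10: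
  fixes M :: "'a measure" and X :: "nat \<Rightarrow> 'a \<Rightarrow> real" and a :: real
  assumes "prob_space M"
    and "\<And>i. X i \<in> borel_measurable M"
    and "prob_space.indep_vars M (\<lambda>_. borel) X UNIV"
    and "\<And>i. distr M borel (X i) = distr M borel (X 0)"
    and "condP M (X 0) a"
  defines "S \<equiv> (\<lambda>k x. \<Sum>i<k. X i x)"
  shows "\<forall>\<epsilon>>0. \<exists>B>0. \<forall>k\<ge>3. \<forall>u>0.
    measure M {x \<in> space M. S k x > u + a}
      \<le> \<epsilon> * measure M {x \<in> space M. S k x > u}
        + measure M {x \<in> space M. S (k - 1) x > u} / measure M {x \<in> space M. X 0 x > B}"
proof (intro allI impI)
  fix \<epsilon> :: real assume eps: "\<epsilon> > 0"
  note PS = assms(1)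
  interpret prob_space M by fact
  note Xm[measurable] = assms(2)
  note ind = assms(3)
  define F where "F t = measure M {x \<in> space M. X 0 x > t}" for t
  define \<delta> where "\<delta> = \<epsilon> / 3"
  have dpos: "\<delta> > 0" using eps by (simp add: \<delta>_def)
  have a: "a > 0" and Fpos: "\<And>t. t > 0 \<Longrightarrow> F t > 0"
    and lim: "((\<lambda>u. F (u + a) / F u) \<longlongrightarrow> 0) at_top"
    using assms(5) by (auto simp: condP_def F_def)
  have "eventually (\<lambda>t. F (t + a) / F t < \<delta>) at_top"
    using order_tendstoD(2)[OF lim dpos] .
  then obtain N where N: "\<And>t. t \<ge> N \<Longrightarrow> F (t + a) / F t < \<delta>"
    by (auto simp: eventually_at_top_linorder)
  define T where "T = max N 1"
  have T1: "T \<ge> 1" by (simp add: T_def)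
  have FT: "F (t + a) \<le> \<delta> * F t" if "t \<ge> T" for t
  proof -
    have "t \<ge> N" "t > 0" using that T1 by (auto simp: T_def)
    then have "F (t + a) / F t < \<delta>" "F t > 0" using N Fpos by auto
    then show ?thesis by (simp add: divide_less_eq)
  qed
  define B where "B = 2 * T + a"
  have Bpos: "B > 0" using T1 a by (simp add: B_def)
  have FB: "F B > 0" using Fpos Bpos by simp
  have distrF: "measure (distr M borel (X j)) {z. z > t} = F t" for j t
  proof -
    have "measure (distr M borel (X j)) {z. z > t} = measure (distr M borel (X 0)) {z. z > t}"
      using assms(4)[of j] by simp
    also have "\<dots> = measure M (X 0 -` {z. z > t} \<inter> space M)"
      by (rule measure_distr) auto
    also have "\<dots> = F t" unfolding F_def by (rule arg_cong[where f="measure M"]) auto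
    finally show ?thesis .
  qed
  have distr1: "measure (distr M borel (X j)) UNIV = 1" for j
    using prob_space.prob_space[OF prob_space_distr[OF Xm[of j]]] by simp
  show "\<exists>B>0. \<forall>k\<ge>3. \<forall>u>0.
    measure M {x \<in> space M. S k x > u + a}
      \<le> \<epsilon> * measure M {x \<in> space M. S k x > u}
        + measure M {x \<in> space M. S (k - 1) x > u} / measure M {x \<in> space M. X 0 x > B}"
  proof (intro exI[of _ B] conjI allI impI Bpos)
    fix k :: nat and u :: real assume k: "k \<ge> 3" and u: "u > 0"
    define m where "m = k - 2"
    have km: "k = Suc (Suc m)" "k - 1 = Suc m" using k by (auto simp: m_def)
    define R where "R x = (\<Sum>i<m. X i x)" for x
    have Rm[measurable]: "R \<in> borel_measurable M" unfolding R_def by measurable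
    have Sk: "S k x = R x + X m x + X (Suc m) x" for x by (simp add: S_def R_def km)
    have Sk1: "S (k - 1) x = R x + X m x" for x by (simp add: S_def R_def km)
    let ?Sk = "measure M {x \<in> space M. R x + X m x + X (Suc m) x > u}"
    let ?Sk1 = "measure M {x \<in> space M. R x + X m x > u}"
    have sumR: "(\<Sum>i<m. restrict (\<lambda>i. X i x) A i) = R x" if "{..<m} \<subseteq> A" for x A
      using that by (auto simp: R_def intro!: sum.cong)
    have distrF': "\<And>j t. measure M {x \<in> space M. X j x > t} = F t"
    proof -
      fix j t
      have "measure M {x \<in> space M. X j x > t} = measure M (X j -` {z. z > t} \<inter> space M)"
        by (rule arg_cong[where f="measure M"]) auto
      also have "\<dots> = measure (distr M borel (X j)) {z. z > t}"
        by (rule measure_distr[symmetric]) auto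
      also have "\<dots> = F t" by (rule distrF)
      finally show "measure M {x \<in> space M. X j x > t} = F t" .
    qed
    have dm: "\<And>t. measure M {x \<in> space M. X m x > t} = F t" by (rule distrF')
    have dSm: "\<And>t. measure M {x \<in> space M. X (Suc m) x > t} = F t" by (rule distrF')
    have m0: "0 < m" using k by (simp add: m_def)
    define E1 where "E1 = {x \<in> space M. R x \<ge> u - B}"
    have P1: "measure M E1 \<le> ?Sk1 / F B"
    proof -
      have "measure M {x\<in>space M. (\<lambda>p. (\<Sum>i<m. fst p i) \<ge> u - B) (restrict (\<lambda>i. X i x) {..<m}, X m x)}
          \<le> (1 / F B) * measure M {x\<in>space M. (\<lambda>p. (\<Sum>i<m. fst p i) \<ge> u - B \<and> snd p > B) (restrict (\<lambda>i. X i x) {..<m}, X m x)}"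
      proof (rule core3[OF PS Xm ind])
        fix v :: "nat \<Rightarrow> real"
        show "measure M {x\<in>space M. (\<lambda>p. (\<Sum>i<m. fst p i) \<ge> u - B) (v, X m x)}
          \<le> (1 / F B) * measure M {x\<in>space M. (\<lambda>p. (\<Sum>i<m. fst p i) \<ge> u - B \<and> snd p > B) (v, X m x)}"
        proof (cases "(\<Sum>i<m. v i) \<ge> u - B")
          case True
          have "measure M {x \<in> space M. X m x > B} = F B" by (rule distrF')
          then show ?thesis using True prob_space FB by simp
        qed simp
      next
        show "Measurable.pred (PiM {..<m} (\<lambda>_. borel) \<Otimes>\<^sub>M (borel :: real measure)) (\<lambda>p. (\<Sum>i<m. fst p i) \<ge> u - B)"
          apply (rule mc[where ll=0 and cc="\<lambda>r y z. r \<ge> u - B" and mm=m])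
          using m0 apply auto[2] apply measurable apply (simp)? done
        show "Measurable.pred (PiM {..<m} (\<lambda>_. borel) \<Otimes>\<^sub>M (borel :: real measure)) (\<lambda>p. (\<Sum>i<m. fst p i) \<ge> u - B \<and> snd p > B)"
          apply (rule mc[where ll=0 and cc="\<lambda>r y z. r \<ge> u - B \<and> z > B" and mm=m])
          using m0 apply auto[2] apply measurable apply (simp)? done
      qed (use FB in auto)
      also have "measure M {x\<in>space M. (\<lambda>p. (\<Sum>i<m. fst p i) \<ge> u - B \<and> snd p > B) (restrict (\<lambda>i. X i x) {..<m}, X m x)} \<le> ?Sk1"
        by (rule finite_measure_mono) (auto simp: sumR R_def)
      finally show ?thesis using FB by (simp add: E1_def sumR R_def divide_right_mono mult_left_mono)
    qed
    define E2 where "E2 = {x \<in> space M. R x + X (Suc m) x \<le> u - T \<and> X m x > u + a - (R x + X (Suc m) x)}"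
    have P2: "measure M E2 \<le> \<delta> * ?Sk"
    proof -
      have "measure M {x\<in>space M. (\<lambda>p. (\<Sum>i<m. fst p i) + fst p (Suc m) \<le> u - T \<and> snd p > u + a - ((\<Sum>i<m. fst p i) + fst p (Suc m))) (restrict (\<lambda>i. X i x) ({..<m} \<union> {Suc m}), X m x)}
          \<le> \<delta> * measure M {x\<in>space M. (\<lambda>p. (\<Sum>i<m. fst p i) + fst p (Suc m) \<le> u - T \<and> snd p > u - ((\<Sum>i<m. fst p i) + fst p (Suc m))) (restrict (\<lambda>i. X i x) ({..<m} \<union> {Suc m}), X m x)}"
      proof (rule core3[OF PS Xm ind])
        fix v :: "nat \<Rightarrow> real"
        show "measure M {x\<in>space M. (\<lambda>p. (\<Sum>i<m. fst p i) + fst p (Suc m) \<le> u - T \<and> snd p > u + a - ((\<Sum>i<m. fst p i) + fst p (Suc m))) (v, X m x)}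
          \<le> \<delta> * measure M {x\<in>space M. (\<lambda>p. (\<Sum>i<m. fst p i) + fst p (Suc m) \<le> u - T \<and> snd p > u - ((\<Sum>i<m. fst p i) + fst p (Suc m))) (v, X m x)}"
        proof (cases "(\<Sum>i<m. v i) + v (Suc m) \<le> u - T")
          case True
          then show ?thesis using dm[of "u + a - ((\<Sum>i<m. v i) + v (Suc m))"] dm[of "u - ((\<Sum>i<m. v i) + v (Suc m))"] FT[of "u - ((\<Sum>i<m. v i) + v (Suc m))"]
            by (simp add: algebra_simps)
        qed simp
      next
        show "Measurable.pred (PiM ({..<m} \<union> {Suc m}) (\<lambda>_. borel) \<Otimes>\<^sub>M (borel :: real measure)) (\<lambda>p. (\<Sum>i<m. fst p i) + fst p (Suc m) \<le> u - T \<and> snd p > u + a - ((\<Sum>i<m. fst p i) + fst p (Suc m)))"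
          apply (rule mc[where ll="Suc m" and cc="\<lambda>r y z. r + y \<le> u - T \<and> z > u + a - (r + y)" and mm=m])
          apply auto[2] apply measurable apply (simp)? done
        show "Measurable.pred (PiM ({..<m} \<union> {Suc m}) (\<lambda>_. borel) \<Otimes>\<^sub>M (borel :: real measure)) (\<lambda>p. (\<Sum>i<m. fst p i) + fst p (Suc m) \<le> u - T \<and> snd p > u - ((\<Sum>i<m. fst p i) + fst p (Suc m)))"
          apply (rule mc[where ll="Suc m" and cc="\<lambda>r y z. r + y \<le> u - T \<and> z > u - (r + y)" and mm=m])
          apply auto[2] apply measurable apply (simp)? done
      qed (use dpos in auto)
      also have "\<delta> * measure M {x\<in>space M. (\<lambda>p. (\<Sum>i<m. fst p i) + fst p (Suc m) \<le> u - T \<and> snd p > u - ((\<Sum>i<m. fst p i) + fst p (Suc m))) (restrict (\<lambda>i. X i x) ({..<m} \<union> {Suc m}), X m x)} \<le> \<delta> * ?Sk"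
        by (rule mult_left_mono[OF finite_measure_mono]) (use dpos in \<open>auto simp: sumR R_def\<close>)
      finally show ?thesis by (simp add: E2_def sumR R_def)
    qed
    define E3 where "E3 = {x \<in> space M. R x + X m x \<le> u - T \<and> X (Suc m) x > u + a - (R x + X m x)}"
    have P3: "measure M E3 \<le> \<delta> * ?Sk"
    proof -
      have "measure M {x\<in>space M. (\<lambda>p. (\<Sum>i<m. fst p i) + fst p m \<le> u - T \<and> snd p > u + a - ((\<Sum>i<m. fst p i) + fst p m)) (restrict (\<lambda>i. X i x) ({..<m} \<union> {m}), X (Suc m) x)}
          \<le> \<delta> * measure M {x\<in>space M. (\<lambda>p. (\<Sum>i<m. fst p i) + fst p m \<le> u - T \<and> snd p > u - ((\<Sum>i<m. fst p i) + fst p m)) (restrict (\<lambda>i. X i x) ({..<m} \<union> {m}), X (Suc m) x)}"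
      proof (rule core3[OF PS Xm ind])
        fix v :: "nat \<Rightarrow> real"
        show "measure M {x\<in>space M. (\<lambda>p. (\<Sum>i<m. fst p i) + fst p m \<le> u - T \<and> snd p > u + a - ((\<Sum>i<m. fst p i) + fst p m)) (v, X (Suc m) x)}
          \<le> \<delta> * measure M {x\<in>space M. (\<lambda>p. (\<Sum>i<m. fst p i) + fst p m \<le> u - T \<and> snd p > u - ((\<Sum>i<m. fst p i) + fst p m)) (v, X (Suc m) x)}"
        proof (cases "(\<Sum>i<m. v i) + v m \<le> u - T")
          case True
          then show ?thesis using dSm[of "u + a - ((\<Sum>i<m. v i) + v m)"] dSm[of "u - ((\<Sum>i<m. v i) + v m)"] FT[of "u - ((\<Sum>i<m. v i) + v m)"]
            by (simp add: algebra_simps)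
        qed simp
      next
        show "Measurable.pred (PiM ({..<m} \<union> {m}) (\<lambda>_. borel) \<Otimes>\<^sub>M (borel :: real measure)) (\<lambda>p. (\<Sum>i<m. fst p i) + fst p m \<le> u - T \<and> snd p > u + a - ((\<Sum>i<m. fst p i) + fst p m))"
          apply (rule mc[where ll=m and cc="\<lambda>r y z. r + y \<le> u - T \<and> z > u + a - (r + y)" and mm=m])
          apply auto[2] apply measurable apply (simp)? done
        show "Measurable.pred (PiM ({..<m} \<union> {m}) (\<lambda>_. borel) \<Otimes>\<^sub>M (borel :: real measure)) (\<lambda>p. (\<Sum>i<m. fst p i) + fst p m \<le> u - T \<and> snd p > u - ((\<Sum>i<m. fst p i) + fst p m))"
          apply (rule mc[where ll=m and cc="\<lambda>r y z. r + y \<le> u - T \<and> z > u - (r + y)" and mm=m])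
          apply auto[2] apply measurable apply (simp)? done
      qed (use dpos in auto)
      also have "\<delta> * measure M {x\<in>space M. (\<lambda>p. (\<Sum>i<m. fst p i) + fst p m \<le> u - T \<and> snd p > u - ((\<Sum>i<m. fst p i) + fst p m)) (restrict (\<lambda>i. X i x) ({..<m} \<union> {m}), X (Suc m) x)} \<le> \<delta> * ?Sk"
        by (rule mult_left_mono[OF finite_measure_mono]) (use dpos in \<open>auto simp: sumR R_def\<close>)
      finally show ?thesis by (simp add: E3_def sumR R_def)
    qed
    define E4 where "E4 = {x \<in> space M. R x < u - B \<and> X (Suc m) x > u - R x - T \<and> X m x > u - R x - T}"
    have P4: "measure M E4 \<le> \<delta> * ?Sk"
    proof -
      have "measure M {x\<in>space M. (\<lambda>p. (\<Sum>i<m. fst p i) < u - B \<and> fst p (Suc m) > u - (\<Sum>i<m. fst p i) - T \<and> snd p > u - (\<Sum>i<m. fst p i) - T) (restrict (\<lambda>i. X i x) ({..<m} \<union> {Suc m}), X m x)}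
          \<le> \<delta> * measure M {x\<in>space M. (\<lambda>p. (\<Sum>i<m. fst p i) < u - B \<and> fst p (Suc m) > u - (\<Sum>i<m. fst p i) - T \<and> snd p > u - (\<Sum>i<m. fst p i) - T - a) (restrict (\<lambda>i. X i x) ({..<m} \<union> {Suc m}), X m x)}"
      proof (rule core3[OF PS Xm ind])
        fix v :: "nat \<Rightarrow> real"
        show "measure M {x\<in>space M. (\<lambda>p. (\<Sum>i<m. fst p i) < u - B \<and> fst p (Suc m) > u - (\<Sum>i<m. fst p i) - T \<and> snd p > u - (\<Sum>i<m. fst p i) - T) (v, X m x)}
          \<le> \<delta> * measure M {x\<in>space M. (\<lambda>p. (\<Sum>i<m. fst p i) < u - B \<and> fst p (Suc m) > u - (\<Sum>i<m. fst p i) - T \<and> snd p > u - (\<Sum>i<m. fst p i) - T - a) (v, X m x)}"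
        proof (cases "(\<Sum>i<m. v i) < u - B \<and> v (Suc m) > u - (\<Sum>i<m. v i) - T")
          case True
          then have "u - (\<Sum>i<m. v i) - T - a \<ge> T" by (simp add: B_def)
          then show ?thesis using True dm[of "u - (\<Sum>i<m. v i) - T"] dm[of "u - (\<Sum>i<m. v i) - T - a"] FT[of "u - (\<Sum>i<m. v i) - T - a"] by simp
        qed auto
      next
        show "Measurable.pred (PiM ({..<m} \<union> {Suc m}) (\<lambda>_. borel) \<Otimes>\<^sub>M (borel :: real measure)) (\<lambda>p. (\<Sum>i<m. fst p i) < u - B \<and> fst p (Suc m) > u - (\<Sum>i<m. fst p i) - T \<and> snd p > u - (\<Sum>i<m. fst p i) - T)"
          apply (rule mc[where ll="Suc m" and cc="\<lambda>r y z. r < u - B \<and> y > u - r - T \<and> z > u - r - T" and mm=m])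
          apply auto[2] apply measurable apply (simp)? done
        show "Measurable.pred (PiM ({..<m} \<union> {Suc m}) (\<lambda>_. borel) \<Otimes>\<^sub>M (borel :: real measure)) (\<lambda>p. (\<Sum>i<m. fst p i) < u - B \<and> fst p (Suc m) > u - (\<Sum>i<m. fst p i) - T \<and> snd p > u - (\<Sum>i<m. fst p i) - T - a)"
          apply (rule mc[where ll="Suc m" and cc="\<lambda>r y z. r < u - B \<and> y > u - r - T \<and> z > u - r - T - a" and mm=m])
          apply auto[2] apply measurable apply (simp)? done
      qed (use dpos in auto)
      also have "\<delta> * measure M {x\<in>space M. (\<lambda>p. (\<Sum>i<m. fst p i) < u - B \<and> fst p (Suc m) > u - (\<Sum>i<m. fst p i) - T \<and> snd p > u - (\<Sum>i<m. fst p i) - T - a) (restrict (\<lambda>i. X i x) ({..<m} \<union> {Suc m}), X m x)} \<le> \<delta> * ?Sk"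
        by (rule mult_left_mono[OF finite_measure_mono]) (use dpos in \<open>auto simp: sumR R_def B_def\<close>)
      finally show ?thesis by (simp add: E4_def sumR R_def)
    qed
    have sub: "{x \<in> space M. S k x > u + a} \<subseteq> E1 \<union> E2 \<union> E3 \<union> E4"
      by (auto simp: Sk E1_def E2_def E3_def E4_def)
    have s1: "E1 \<in> sets M" unfolding E1_def by measurable
    have s2: "E2 \<in> sets M" unfolding E2_def by measurable
    have s3: "E3 \<in> sets M" unfolding E3_def by measurable
    have s4: "E4 \<in> sets M" unfolding E4_def by measurable
    have u1: "measure M (E1 \<union> E2 \<union> E3 \<union> E4) \<le> measure M (E1 \<union> E2 \<union> E3) + measure M E4"
      by (rule measure_Un_le) (use s1 s2 s3 s4 in auto)
    have u2: "measure M (E1 \<union> E2 \<union> E3) \<le> measure M (E1 \<union> E2) + measure M E3"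
      by (rule measure_Un_le) (use s1 s2 s3 s4 in auto)
    have u3: "measure M (E1 \<union> E2) \<le> measure M E1 + measure M E2"
      by (rule measure_Un_le) (use s1 s2 s3 s4 in auto)
    have "measure M {x \<in> space M. S k x > u + a} \<le> measure M (E1 \<union> E2 \<union> E3 \<union> E4)"
      by (rule finite_measure_mono[OF sub]) (use s1 s2 s3 s4 in auto)
    also have "\<dots> \<le> measure M E1 + measure M E2 + measure M E3 + measure M E4"
      using u1 u2 u3 by linarith
    also have "\<dots> \<le> ?Sk1 / F B + \<delta> * ?Sk + \<delta> * ?Sk + \<delta> * ?Sk"
      using P1 P2 P3 P4 by linarith
    also have "\<dots> = \<epsilon> * ?Sk + ?Sk1 / F B" by (simp add: \<delta>_def)
    finally have fin: "measure M {x \<in> space M. S k x > u + a} \<le> \<epsilon> * ?Sk + ?Sk1 / F B" .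
    have eSk: "{x \<in> space M. S k x > u} = {x \<in> space M. R x + X m x + X (Suc m) x > u}" by (simp only: Sk)
    have eSk1: "{x \<in> space M. S (k - 1) x > u} = {x \<in> space M. R x + X m x > u}" by (simp only: Sk1)
    have eFB: "measure M {x \<in> space M. X 0 x > B} = F B" by (simp add: F_def)
    show "measure M {x \<in> space M. S k x > u + a}
      \<le> \<epsilon> * measure M {x \<in> space M. S k x > u}
        + measure M {x \<in> space M. S (k - 1) x > u} / measure M {x \<in> space M. X 0 x > B}"
      unfolding eSk eSk1 eFB by (rule fin)
  qed
qed
end
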